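(* Let $G$ be a group and $N\subseteq G$ a normal subgroup. If $G$ has no non-trivial narrow normal subgroups, then the center $Z(N)$ of $N$ is trivial.
   Context: A group is narrow if it contains no subgroup isomorphic to the free group $F_2$ of rank $2$. *)

theory Defs
  imports "HOL-Algebra.Algebra"
begin

text \<open>The free group of rank 2 as reduced words. A letter is a pair (generator, sign):
  generator False = a, True = b; sign True = positive exponent, False = inverse.\<close>

type_synonym letter = "bool \<times> bool"

definition inv_letter :: "letter \<Rightarrow> letter" where
  "inv_letter x = (fst x, \<not> snd x)"

fun red_cons :: "letter \<Rightarrow> letter list \<Rightarrow> letter list" where
  "red_cons x [] = [x]"
| "red_cons x (y # ys) = (if y = inv_letter x then ys else x # y # ys)"

definition reduce_word :: "letter list \<Rightarrow> letter list" where
  "reduce_word w = foldr red_cons w []"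

definition reduced_word :: "letter list \<Rightarrow> bool" where
  "reduced_word w \<longleftrightarrow> (\<forall>i. Suc i < length w \<longrightarrow> w ! Suc i \<noteq> inv_letter (w ! i))"

definition free_group2 :: "letter list monoid" where
  "free_group2 = \<lparr>carrier = {w. reduced_word w}, monoid.mult = (\<lambda>u v. reduce_word (u @ v)), one = []\<rparr>"

definition narrow :: "('a, 'b) monoid_scheme \<Rightarrow> bool" where
  "narrow K \<longleftrightarrow> \<not> (\<exists>H. subgroup H K \<and> K\<lparr>carrier := H\<rparr> \<cong> free_group2)"

definition group_center :: "('a, 'b) monoid_scheme \<Rightarrow> 'a set" where
  "group_center K = {z \<in> carrier K. \<forall>x \<in> carrier K. z \<otimes>\<^bsub>K\<^esub> x = x \<otimes>\<^bsub>K\<^esub> z}"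

end

theory Submission
  imports Defs
begin

lemma fg2_noncomm:
  "\<not> (\<forall>u\<in>carrier free_group2. \<forall>v\<in>carrier free_group2.
        u \<otimes>\<^bsub>free_group2\<^esub> v = v \<otimes>\<^bsub>free_group2\<^esub> u)"
proof -
  have a: "[(False,True)] \<in> carrier free_group2" and b: "[(True,True)] \<in> carrier free_group2"
    by (auto simp: free_group2_def reduced_word_def)
  have "[(False,True)] \<otimes>\<^bsub>free_group2\<^esub> [(True,True)] \<noteq> [(True,True)] \<otimes>\<^bsub>free_group2\<^esub> [(False,True)]"
    by (simp add: free_group2_def reduce_word_def inv_letter_def)
  with a b show ?thesis by blast
qed

lemma abelian_narrow:
  assumes "\<forall>x\<in>carrier K. \<forall>y\<in>carrier K. x \<otimes>\<^bsub>K\<^esub> y = y \<otimes>\<^bsub>K\<^esub> x"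
  shows "narrow K"
  unfolding narrow_def
proof
  assume "\<exists>H. subgroup H K \<and> K\<lparr>carrier := H\<rparr> \<cong> free_group2"
  then obtain H h where H: "subgroup H K" and h: "h \<in> iso (K\<lparr>carrier := H\<rparr>) free_group2"
    unfolding is_iso_def by blast
  have hom: "h \<in> hom (K\<lparr>carrier := H\<rparr>) free_group2" and bij: "bij_betw h H (carrier free_group2)"
    using h by (auto simp: iso_def)
  have "\<forall>u\<in>carrier free_group2. \<forall>v\<in>carrier free_group2.
        u \<otimes>\<^bsub>free_group2\<^esub> v = v \<otimes>\<^bsub>free_group2\<^esub> u"
  proof (intro ballI)
    fix u v assume u: "u \<in> carrier free_group2" and v: "v \<in> carrier free_group2"
    obtain x where x: "x \<in> H" "u = h x" using bij u unfolding bij_betw_def by auto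
    obtain y where y: "y \<in> H" "v = h y" using bij v unfolding bij_betw_def by auto
    have "h (x \<otimes>\<^bsub>K\<^esub> y) = u \<otimes>\<^bsub>free_group2\<^esub> v"
      using hom x y by (auto simp: hom_def)
    moreover have "h (y \<otimes>\<^bsub>K\<^esub> x) = v \<otimes>\<^bsub>free_group2\<^esub> u"
      using hom x y by (auto simp: hom_def)
    moreover have "x \<otimes>\<^bsub>K\<^esub> y = y \<otimes>\<^bsub>K\<^esub> x"
      using assms x y subgroup.subset[OF H] by blast
    ultimately show "u \<otimes>\<^bsub>free_group2\<^esub> v = v \<otimes>\<^bsub>free_group2\<^esub> u" by simp
  qed
  with fg2_noncomm show False by blast
qed

theorem proposition3p7:
  fixes G :: "('a, 'b) monoid_scheme" and N :: "'a set"
  assumes "group G"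
    and "N \<lhd> G"
    and "\<And>M. M \<lhd> G \<Longrightarrow> narrow (G\<lparr>carrier := M\<rparr>) \<Longrightarrow> M = {\<one>\<^bsub>G\<^esub>}"
  shows "group_center (G\<lparr>carrier := N\<rparr>) = {\<one>\<^bsub>G\<^esub>}"
proof -
  interpret G: group G by fact
  have sN: "subgroup N G" using assms(2) using normal_imp_subgroup by blast
  have Nsub: "N \<subseteq> carrier G" using sN subgroup.subset by blast
  have conjN: "\<And>g n. g \<in> carrier G \<Longrightarrow> n \<in> N \<Longrightarrow> g \<otimes>\<^bsub>G\<^esub> n \<otimes>\<^bsub>G\<^esub> inv\<^bsub>G\<^esub> g \<in> N"
    using assms(2) by (simp add: G.normal_inv_iff)
  define Z where "Z = group_center (G\<lparr>carrier := N\<rparr>)"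
  have Zdef: "Z = {z \<in> N. \<forall>x\<in>N. z \<otimes>\<^bsub>G\<^esub> x = x \<otimes>\<^bsub>G\<^esub> z}"
    by (simp add: Z_def group_center_def)
  have Zmem: "\<And>z. z \<in> Z \<longleftrightarrow> z \<in> N \<and> (\<forall>x\<in>N. z \<otimes>\<^bsub>G\<^esub> x = x \<otimes>\<^bsub>G\<^esub> z)"
    unfolding Zdef by blast
  have subZ: "subgroup Z G"
  proof (rule G.subgroupI)
    show "Z \<subseteq> carrier G" using Nsub Zdef by blast
    show "Z \<noteq> {}"
    proof -
      have "\<one>\<^bsub>G\<^esub> \<in> N" by (rule subgroup.one_closed[OF sN])
      hence "\<one>\<^bsub>G\<^esub> \<in> Z" using Nsub by (intro iffD2[OF Zmem] conjI ballI) auto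
      thus ?thesis by blast
    qed
    fix a b assume a: "a \<in> Z" and b: "b \<in> Z"
    show "inv\<^bsub>G\<^esub> a \<in> Z"
    proof -
      have aN: "a \<in> N" by (rule conjunct1[OF iffD1[OF Zmem a]])
      have ac: "\<forall>x\<in>N. a \<otimes>\<^bsub>G\<^esub> x = x \<otimes>\<^bsub>G\<^esub> a" by (rule conjunct2[OF iffD1[OF Zmem a]])
      have aG: "a \<in> carrier G" using aN Nsub by auto
      have "inv\<^bsub>G\<^esub> a \<in> N" by (rule subgroup.m_inv_closed[OF sN aN])
      moreover have "\<forall>x\<in>N. inv\<^bsub>G\<^esub> a \<otimes>\<^bsub>G\<^esub> x = x \<otimes>\<^bsub>G\<^esub> inv\<^bsub>G\<^esub> a"
      proof
        fix x assume xN: "x \<in> N"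
        hence xG: "x \<in> carrier G" using Nsub by auto
        have "a \<otimes>\<^bsub>G\<^esub> x = x \<otimes>\<^bsub>G\<^esub> a" using ac xN by blast
        note ax = this
        have "inv\<^bsub>G\<^esub> a \<otimes>\<^bsub>G\<^esub> x = inv\<^bsub>G\<^esub> a \<otimes>\<^bsub>G\<^esub> x \<otimes>\<^bsub>G\<^esub> (a \<otimes>\<^bsub>G\<^esub> inv\<^bsub>G\<^esub> a)"
          using aG xG by (simp only: G.m_assoc G.inv_closed G.m_closed G.one_closed G.l_inv G.r_inv G.l_one G.r_one)
        also have "\<dots> = inv\<^bsub>G\<^esub> a \<otimes>\<^bsub>G\<^esub> (x \<otimes>\<^bsub>G\<^esub> a) \<otimes>\<^bsub>G\<^esub> inv\<^bsub>G\<^esub> a"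
          using aG xG by (simp only: G.m_assoc G.inv_closed G.m_closed)
        also have "\<dots> = inv\<^bsub>G\<^esub> a \<otimes>\<^bsub>G\<^esub> (a \<otimes>\<^bsub>G\<^esub> x) \<otimes>\<^bsub>G\<^esub> inv\<^bsub>G\<^esub> a" by (simp only: ax)
        also have "\<dots> = (inv\<^bsub>G\<^esub> a \<otimes>\<^bsub>G\<^esub> a) \<otimes>\<^bsub>G\<^esub> x \<otimes>\<^bsub>G\<^esub> inv\<^bsub>G\<^esub> a"
          using aG xG by (simp only: G.m_assoc G.inv_closed G.m_closed)
        also have "\<dots> = x \<otimes>\<^bsub>G\<^esub> inv\<^bsub>G\<^esub> a"
          using aG xG by (simp only: G.m_assoc G.inv_closed G.m_closed G.one_closed G.l_inv G.r_inv G.l_one G.r_one)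
        finally show "inv\<^bsub>G\<^esub> a \<otimes>\<^bsub>G\<^esub> x = x \<otimes>\<^bsub>G\<^esub> inv\<^bsub>G\<^esub> a" .
      qed
      ultimately show ?thesis by (rule iffD2[OF Zmem, OF conjI])
    qed
    show "a \<otimes>\<^bsub>G\<^esub> b \<in> Z"
    proof -
      have aN: "a \<in> N" by (rule conjunct1[OF iffD1[OF Zmem a]])
      have ac: "\<forall>x\<in>N. a \<otimes>\<^bsub>G\<^esub> x = x \<otimes>\<^bsub>G\<^esub> a" by (rule conjunct2[OF iffD1[OF Zmem a]])
      have bN: "b \<in> N" by (rule conjunct1[OF iffD1[OF Zmem b]])
      have bc: "\<forall>x\<in>N. b \<otimes>\<^bsub>G\<^esub> x = x \<otimes>\<^bsub>G\<^esub> b" by (rule conjunct2[OF iffD1[OF Zmem b]])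
      have aG: "a \<in> carrier G" and bG: "b \<in> carrier G" using aN bN Nsub by auto
      have "a \<otimes>\<^bsub>G\<^esub> b \<in> N" by (rule subgroup.m_closed[OF sN aN bN])
      moreover have "\<forall>x\<in>N. (a \<otimes>\<^bsub>G\<^esub> b) \<otimes>\<^bsub>G\<^esub> x = x \<otimes>\<^bsub>G\<^esub> (a \<otimes>\<^bsub>G\<^esub> b)"
      proof
        fix x assume xN: "x \<in> N"
        hence xG: "x \<in> carrier G" using Nsub by auto
        have "(a \<otimes>\<^bsub>G\<^esub> b) \<otimes>\<^bsub>G\<^esub> x = a \<otimes>\<^bsub>G\<^esub> (b \<otimes>\<^bsub>G\<^esub> x)" using aG bG xG by (simp only: G.m_assoc)
        also have "\<dots> = a \<otimes>\<^bsub>G\<^esub> (x \<otimes>\<^bsub>G\<^esub> b)" using bc xN by metis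
        also have "\<dots> = (a \<otimes>\<^bsub>G\<^esub> x) \<otimes>\<^bsub>G\<^esub> b" using aG bG xG by (simp only: G.m_assoc)
        also have "\<dots> = (x \<otimes>\<^bsub>G\<^esub> a) \<otimes>\<^bsub>G\<^esub> b" using ac xN by metis
        also have "\<dots> = x \<otimes>\<^bsub>G\<^esub> (a \<otimes>\<^bsub>G\<^esub> b)" using aG bG xG by (simp only: G.m_assoc)
        finally show "(a \<otimes>\<^bsub>G\<^esub> b) \<otimes>\<^bsub>G\<^esub> x = x \<otimes>\<^bsub>G\<^esub> (a \<otimes>\<^bsub>G\<^esub> b)" .
      qed
      ultimately show ?thesis by (rule iffD2[OF Zmem, OF conjI])
    qed
  qed
  have normZ: "Z \<lhd> G"
    unfolding G.normal_inv_iff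
  proof (intro conjI ballI subZ)
    fix g z assume g: "g \<in> carrier G" and z: "z \<in> Z"
    have zN: "z \<in> N" by (rule conjunct1[OF iffD1[OF Zmem z]])
    have zc: "\<forall>x\<in>N. z \<otimes>\<^bsub>G\<^esub> x = x \<otimes>\<^bsub>G\<^esub> z" by (rule conjunct2[OF iffD1[OF Zmem z]])
    have zG: "z \<in> carrier G" using zN Nsub by auto
    have ig: "inv\<^bsub>G\<^esub> g \<in> carrier G" using g by simp
    have "g \<otimes>\<^bsub>G\<^esub> z \<otimes>\<^bsub>G\<^esub> inv\<^bsub>G\<^esub> g \<in> N" using conjN g zN by blast
    moreover have "\<forall>x\<in>N. (g \<otimes>\<^bsub>G\<^esub> z \<otimes>\<^bsub>G\<^esub> inv\<^bsub>G\<^esub> g) \<otimes>\<^bsub>G\<^esub> x = x \<otimes>\<^bsub>G\<^esub> (g \<otimes>\<^bsub>G\<^esub> z \<otimes>\<^bsub>G\<^esub> inv\<^bsub>G\<^esub> g)"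
    proof
      fix x assume xN: "x \<in> N"
      hence xG: "x \<in> carrier G" using Nsub by auto
      define y where "y = inv\<^bsub>G\<^esub> g \<otimes>\<^bsub>G\<^esub> x \<otimes>\<^bsub>G\<^esub> g"
      have "inv\<^bsub>G\<^esub> g \<otimes>\<^bsub>G\<^esub> x \<otimes>\<^bsub>G\<^esub> inv\<^bsub>G\<^esub> (inv\<^bsub>G\<^esub> g) \<in> N" using conjN ig xN by blast
      hence yN: "y \<in> N" using g by (simp add: y_def)
      have yG: "y \<in> carrier G" using yN Nsub by auto
      have zy: "z \<otimes>\<^bsub>G\<^esub> y = y \<otimes>\<^bsub>G\<^esub> z" using zc yN by auto
      have xe: "x = g \<otimes>\<^bsub>G\<^esub> y \<otimes>\<^bsub>G\<^esub> inv\<^bsub>G\<^esub> g"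
      proof -
        have "g \<otimes>\<^bsub>G\<^esub> y \<otimes>\<^bsub>G\<^esub> inv\<^bsub>G\<^esub> g = g \<otimes>\<^bsub>G\<^esub> (inv\<^bsub>G\<^esub> g \<otimes>\<^bsub>G\<^esub> x \<otimes>\<^bsub>G\<^esub> g) \<otimes>\<^bsub>G\<^esub> inv\<^bsub>G\<^esub> g" by (simp add: y_def)
        also have "\<dots> = (g \<otimes>\<^bsub>G\<^esub> inv\<^bsub>G\<^esub> g) \<otimes>\<^bsub>G\<^esub> x \<otimes>\<^bsub>G\<^esub> (g \<otimes>\<^bsub>G\<^esub> inv\<^bsub>G\<^esub> g)"
          using g xG by (simp only: G.m_assoc G.inv_closed G.m_closed)
        also have "\<dots> = x" using g xG by (simp only: G.r_inv G.l_one G.r_one)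
        finally show ?thesis by (rule sym)
      qed

      have "(g \<otimes>\<^bsub>G\<^esub> z \<otimes>\<^bsub>G\<^esub> inv\<^bsub>G\<^esub> g) \<otimes>\<^bsub>G\<^esub> x = g \<otimes>\<^bsub>G\<^esub> z \<otimes>\<^bsub>G\<^esub> (inv\<^bsub>G\<^esub> g \<otimes>\<^bsub>G\<^esub> g) \<otimes>\<^bsub>G\<^esub> y \<otimes>\<^bsub>G\<^esub> inv\<^bsub>G\<^esub> g"
        using g zG yG by (simp only: xe G.m_assoc G.inv_closed G.m_closed)
      also have "\<dots> = g \<otimes>\<^bsub>G\<^esub> (z \<otimes>\<^bsub>G\<^esub> y) \<otimes>\<^bsub>G\<^esub> inv\<^bsub>G\<^esub> g" using g zG yG by (simp only: G.m_assoc G.inv_closed G.m_closed G.one_closed G.l_inv G.r_inv G.l_one G.r_one)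
      also have "\<dots> = g \<otimes>\<^bsub>G\<^esub> (y \<otimes>\<^bsub>G\<^esub> z) \<otimes>\<^bsub>G\<^esub> inv\<^bsub>G\<^esub> g" using zy by simp
      also have "\<dots> = g \<otimes>\<^bsub>G\<^esub> y \<otimes>\<^bsub>G\<^esub> (inv\<^bsub>G\<^esub> g \<otimes>\<^bsub>G\<^esub> g) \<otimes>\<^bsub>G\<^esub> z \<otimes>\<^bsub>G\<^esub> inv\<^bsub>G\<^esub> g" using g zG yG by (simp only: G.m_assoc G.inv_closed G.m_closed G.one_closed G.l_inv G.r_inv G.l_one G.r_one)
      also have "\<dots> = x \<otimes>\<^bsub>G\<^esub> (g \<otimes>\<^bsub>G\<^esub> z \<otimes>\<^bsub>G\<^esub> inv\<^bsub>G\<^esub> g)"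
        using g zG yG by (simp only: xe G.m_assoc G.inv_closed G.m_closed)
      finally show "(g \<otimes>\<^bsub>G\<^esub> z \<otimes>\<^bsub>G\<^esub> inv\<^bsub>G\<^esub> g) \<otimes>\<^bsub>G\<^esub> x = x \<otimes>\<^bsub>G\<^esub> (g \<otimes>\<^bsub>G\<^esub> z \<otimes>\<^bsub>G\<^esub> inv\<^bsub>G\<^esub> g)" .
    qed
    ultimately show "g \<otimes>\<^bsub>G\<^esub> z \<otimes>\<^bsub>G\<^esub> inv\<^bsub>G\<^esub> g \<in> Z" by (rule iffD2[OF Zmem, OF conjI])
  qed
  have "narrow (G\<lparr>carrier := Z\<rparr>)"
  proof (rule abelian_narrow, intro ballI)
    fix u v assume "u \<in> carrier (G\<lparr>carrier := Z\<rparr>)" "v \<in> carrier (G\<lparr>carrier := Z\<rparr>)"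
    hence u: "u \<in> Z" and v: "v \<in> N" using Zdef by auto
    from u have "\<forall>x\<in>N. u \<otimes>\<^bsub>G\<^esub> x = x \<otimes>\<^bsub>G\<^esub> u" using Zdef by blast
    with v have "u \<otimes>\<^bsub>G\<^esub> v = v \<otimes>\<^bsub>G\<^esub> u" by blast
    thus "u \<otimes>\<^bsub>G\<lparr>carrier := Z\<rparr>\<^esub> v = v \<otimes>\<^bsub>G\<lparr>carrier := Z\<rparr>\<^esub> u" by simp
  qed
  hence "Z = {\<one>\<^bsub>G\<^esub>}" using assms(3) normZ by blast
  thus ?thesis by (simp add: Z_def)
qed

end
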